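(* Let $G$ be a connected graph of order $n\ge 2$, and let $H$ be a graph of order $m\ge 1$. (a) If $n\ge 4$, then $O_{\rm SR}(G\odot H)=\mathcal{B}$. (b) If $n=3$, then $O_{\rm SR}(G\odot H)=\mathcal{N}$ if $m=1$ and $O_{\rm SR}(G\odot H)=\mathcal{B}$ if $m\ge 2$. (c) If $n=2$, then $O_{\rm SR}(G\odot H)=\mathcal{M}$ if $m=1$ and $O_{\rm SR}(G\odot H)=\mathcal{B}$ if $m\ge 2$.
   Context: All graphs are finite, simple and undirected. For graphs $G$ with $V(G)=\{u_1,\dots,u_n\}$ and $H$, the corona product $G\odot H$ is obtained from $G$ and $n$ disjoint copies $H_1,\dots,H_n$ of $H$ by adding an edge from $u_i$ to every vertex of $H_i$ for each $i$. A set $S\subseteq V(X)$ is a strong resolving set of a connected graph $X$ if for all distinct $x,y\in V(X)$ there exists $z\in S$ such that $x$ lies on a $y$–$z$ geodesic or $y$ lies on an $x$–$z$ geodesic. The Maker–Breaker strong resolving game on $X$: Maker and Breaker alternately select a not-yet-chosen vertex of $X$; Maker wins if the vertices he selects contain a strong resolving set of $X$, Breaker wins otherwise. In the M-game Maker moves first, in the B-game Breaker moves first. $O_{\rm SR}(X)=\mathcal{M}$ if Maker has a winning strategy in both games, $\mathcal{B}$ if Breaker has a winning strategy in both, and $\mathcal{N}$ if the first player has a winning strategy in each. *)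

theory Defs
  imports Main
begin

definition simple_graph :: "'a set \<Rightarrow> ('a \<Rightarrow> 'a \<Rightarrow> bool) \<Rightarrow> bool" where
  "simple_graph V E \<longleftrightarrow> finite V \<and> (\<forall>x y. E x y \<longrightarrow> x \<in> V \<and> y \<in> V)
     \<and> (\<forall>x y. E x y \<longrightarrow> E y x) \<and> (\<forall>x. \<not> E x x)"

definition walk :: "'a set \<Rightarrow> ('a \<Rightarrow> 'a \<Rightarrow> bool) \<Rightarrow> 'a list \<Rightarrow> bool" where
  "walk V E p \<longleftrightarrow> p \<noteq> [] \<and> set p \<subseteq> V \<and> (\<forall>i. Suc i < length p \<longrightarrow> E (p ! i) (p ! Suc i))"

definition connected_graph :: "'a set \<Rightarrow> ('a \<Rightarrow> 'a \<Rightarrow> bool) \<Rightarrow> bool" where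
  "connected_graph V E \<longleftrightarrow> V \<noteq> {} \<and>
     (\<forall>x\<in>V. \<forall>y\<in>V. \<exists>p. walk V E p \<and> hd p = x \<and> last p = y)"

definition gdist :: "'a set \<Rightarrow> ('a \<Rightarrow> 'a \<Rightarrow> bool) \<Rightarrow> 'a \<Rightarrow> 'a \<Rightarrow> nat" where
  "gdist V E x y = (LEAST k. \<exists>p. walk V E p \<and> hd p = x \<and> last p = y \<and> length p = Suc k)"

definition geodesic :: "'a set \<Rightarrow> ('a \<Rightarrow> 'a \<Rightarrow> bool) \<Rightarrow> 'a list \<Rightarrow> 'a \<Rightarrow> 'a \<Rightarrow> bool" where
  "geodesic V E p y z \<longleftrightarrow> walk V E p \<and> hd p = y \<and> last p = z \<and> length p = Suc (gdist V E y z)"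

definition on_geodesic :: "'a set \<Rightarrow> ('a \<Rightarrow> 'a \<Rightarrow> bool) \<Rightarrow> 'a \<Rightarrow> 'a \<Rightarrow> 'a \<Rightarrow> bool" where
  "on_geodesic V E x y z \<longleftrightarrow> (\<exists>p. geodesic V E p y z \<and> x \<in> set p)"

definition strong_resolving_set :: "'a set \<Rightarrow> ('a \<Rightarrow> 'a \<Rightarrow> bool) \<Rightarrow> 'a set \<Rightarrow> bool" where
  "strong_resolving_set V E S \<longleftrightarrow> S \<subseteq> V \<and>
     (\<forall>x\<in>V. \<forall>y\<in>V. x \<noteq> y \<longrightarrow> (\<exists>z\<in>S. on_geodesic V E x y z \<or> on_geodesic V E y x z))"

text \<open>Corona product G \<odot> H: vertices Inl u (u in G) and Inr (u,h) (vertex h of the copy H_u).\<close>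
definition corona_V :: "'a set \<Rightarrow> 'b set \<Rightarrow> ('a + 'a \<times> 'b) set" where
  "corona_V VG VH = Inl ` VG \<union> Inr ` (VG \<times> VH)"

fun corona_E :: "'a set \<Rightarrow> ('a \<Rightarrow> 'a \<Rightarrow> bool) \<Rightarrow> 'b set \<Rightarrow> ('b \<Rightarrow> 'b \<Rightarrow> bool)
    \<Rightarrow> ('a + 'a \<times> 'b) \<Rightarrow> ('a + 'a \<times> 'b) \<Rightarrow> bool" where
  "corona_E VG EG VH EH (Inl u) (Inl v) = EG u v"
| "corona_E VG EG VH EH (Inl u) (Inr (v, h)) = (u = v \<and> u \<in> VG \<and> h \<in> VH)"
| "corona_E VG EG VH EH (Inr (v, h)) (Inl u) = (u = v \<and> u \<in> VG \<and> h \<in> VH)"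
| "corona_E VG EG VH EH (Inr (u, h)) (Inr (v, k)) = (u = v \<and> u \<in> VG \<and> EH h k)"

text \<open>Maker-Breaker game on board X with winning sets W (Maker wins iff his final set
  contains a set satisfying W).  maker_wins k mturn X M B: with k free vertices left,
  Maker has chosen M, Breaker B, and mturn says whether Maker moves next; true iff
  Maker has a winning strategy from this position (finite game, evaluated by minimax).\<close>
fun maker_wins :: "nat \<Rightarrow> bool \<Rightarrow> ('a set \<Rightarrow> bool) \<Rightarrow> 'a set \<Rightarrow> 'a set \<Rightarrow> 'a set \<Rightarrow> bool" where
  "maker_wins 0 mturn W X M B = (\<exists>S\<subseteq>M. W S)"
| "maker_wins (Suc k) mturn W X M B =
     (if mturn then (\<exists>x\<in>X - (M \<union> B). maker_wins k False W X (insert x M) B)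
      else (\<forall>x\<in>X - (M \<union> B). maker_wins k True W X M (insert x B)))"

definition maker_wins_M_game :: "('a set \<Rightarrow> bool) \<Rightarrow> 'a set \<Rightarrow> bool" where
  "maker_wins_M_game W X = maker_wins (card X) True W X {} {}"

definition maker_wins_B_game :: "('a set \<Rightarrow> bool) \<Rightarrow> 'a set \<Rightarrow> bool" where
  "maker_wins_B_game W X = maker_wins (card X) False W X {} {}"

datatype outcome = Out_M | Out_B | Out_N | Out_P

text \<open>Outcome (finite games are determined: Breaker wins iff Maker does not).
  Out_P (second player wins both) is included for totality.\<close>
definition game_outcome :: "('a set \<Rightarrow> bool) \<Rightarrow> 'a set \<Rightarrow> outcome" where
  "game_outcome W X =
    (if maker_wins_M_game W X \<and> maker_wins_B_game W X then Out_M
     else if \<not> maker_wins_M_game W X \<and> \<not> maker_wins_B_game W X then Out_B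
     else if maker_wins_M_game W X \<and> \<not> maker_wins_B_game W X then Out_N
     else Out_P)"

definition O_SR :: "'a set \<Rightarrow> ('a \<Rightarrow> 'a \<Rightarrow> bool) \<Rightarrow> outcome" where
  "O_SR V E = game_outcome (strong_resolving_set V E) V"

end

theory Submission
  imports Defs
begin

lemma succ_nth: "successively E p \<longleftrightarrow> (\<forall>i. Suc i < length p \<longrightarrow> E (p ! i) (p ! Suc i))"
proof (induction p)
  case Nil then show ?case by simp
next
  case (Cons a p)
  show ?case
  proof (cases p)
    case Nil then show ?thesis by simp
  next
    case (Cons b q)
    have "successively E (a # p) \<longleftrightarrow> E a b \<and> successively E p" using Cons by simp
    also have "\<dots> \<longleftrightarrow> (\<forall>i. Suc i < length (a#p) \<longrightarrow> E ((a#p) ! i) ((a#p) ! Suc i))"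
      using Cons.IH Cons by (auto simp: nth_Cons split: nat.splits)
    finally show ?thesis .
  qed
qed

lemma walk_succ: "walk V E p \<longleftrightarrow> p \<noteq> [] \<and> set p \<subseteq> V \<and> successively E p"
  unfolding walk_def succ_nth by simp

lemma join_walk:
  assumes w: "walk V E p" and ij: "i < j" "j \<le> length p"
    and e1: "j < length p \<Longrightarrow> E (p!i) (p!j)" and e2: "j = length p \<Longrightarrow> p!i = last p"
  shows "walk V E (take (Suc i) p @ drop j p) \<and> hd (take (Suc i) p @ drop j p) = hd p
     \<and> last (take (Suc i) p @ drop j p) = last p
     \<and> length (take (Suc i) p @ drop j p) = Suc i + (length p - j)"
proof -
  have il: "i < length p" using ij by simp
  have sp: "successively E p" "set p \<subseteq> V" "p \<noteq> []" using w by (auto simp: walk_succ)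
  have st: "successively E (take (Suc i) p)" "successively E (drop j p)"
  proof -
    have a: "successively E (take (Suc i) p @ drop (Suc i) p)" using sp(1) by simp
    have b: "successively E (take j p @ drop j p)" using sp(1) by simp
    show "successively E (take (Suc i) p)" using a unfolding successively_append_iff by blast
    show "successively E (drop j p)" using b unfolding successively_append_iff by blast
  qed
  have lt: "last (take (Suc i) p) = p ! i" using il
    by (metis last_snoc take_Suc_conv_app_nth)
  have hd_nonempty: "take (Suc i) p \<noteq> []" using sp(3) by simp
  have s: "successively E (take (Suc i) p @ drop j p)"
  proof (cases "j < length p")
    case True
    then have "hd (drop j p) = p ! j" by (simp add: hd_drop_conv_nth)
    then show ?thesis unfolding successively_append_iff using st True e1 lt by simp
  next
    case False then have "drop j p = []" using ij by simp
    then show ?thesis using st by simp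
  qed
  have set: "set (take (Suc i) p @ drop j p) \<subseteq> V" using sp(2)
    using sp(2) set_take_subset[of "Suc i" p] set_drop_subset[of j p] by auto
  have hd: "hd (take (Suc i) p @ drop j p) = hd p" using hd_nonempty sp(3)
    by (simp add: hd_append hd_take)
  have last: "last (take (Suc i) p @ drop j p) = last p"
  proof (cases "j < length p")
    case True then show ?thesis by (simp add: last_append)
  next
    case False then have "j = length p" using ij by simp
    then show ?thesis using e2 lt by simp
  qed
  show ?thesis using s set hd last hd_nonempty ij il by (auto simp: walk_succ min_def)
qed

lemma short_eq:
  assumes w: "walk V E p" and "i < k" "k < length p" "p!i = p!k"
  shows "\<exists>q. walk V E q \<and> hd q = hd p \<and> last q = last p \<and> length q < length p"
proof -
  have "E (p!i) (p!Suc k)" if "Suc k < length p" using w that assms(4) by (simp add: walk_def)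
  moreover have "p!i = last p" if "Suc k = length p" using that assms(4)
    by (metis diff_Suc_1 last_conv_nth list.size(3) nat.simps(3))
  ultimately show ?thesis using join_walk[OF w, of i "Suc k"] assms(2,3)
    by (intro exI[of _ "take (Suc i) p @ drop (Suc k) p"]) auto
qed

lemma short_adj:
  assumes w: "walk V E p" and "Suc i < k" "k < length p" "E (p!i) (p!k)"
  shows "\<exists>q. walk V E q \<and> hd q = hd p \<and> last q = last p \<and> length q < length p"
  using join_walk[OF w, of i k] assms
  by (intro exI[of _ "take (Suc i) p @ drop k p"]) auto

lemma geo_min:
  assumes "geodesic V E p y z" "walk V E q" "hd q = y" "last q = z"
  shows "length p \<le> length q"
proof -
  have "q \<noteq> []" using assms(2) by (simp add: walk_def)
  then have "gdist V E y z \<le> length q - 1" unfolding gdist_def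
    by (intro Least_le) (use assms in auto)
  then show ?thesis using assms(1) \<open>q \<noteq> []\<close> by (cases q) (auto simp: geodesic_def)
qed

lemma geo_noshort:
  assumes "geodesic V E p y z" "\<exists>q. walk V E q \<and> hd q = hd p \<and> last q = last p \<and> length q < length p"
  shows False
  using assms geo_min by (metis geodesic_def not_le)

lemma geo_exists:
  assumes "walk V E q" "hd q = y" "last q = z"
  shows "\<exists>p. geodesic V E p y z"
proof -
  have ex: "\<exists>k p. walk V E p \<and> hd p = y \<and> last p = z \<and> length p = Suc k"
    using assms by (intro exI[of _ "length q - 1"] exI[of _ q]) (auto simp: walk_def)
  show ?thesis using LeastI_ex[OF ex] unfolding geodesic_def gdist_def by blast
qed

lemma E_into_Inr:
  assumes "corona_E VG EG VH EH a (Inr (i, h))"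
  shows "a = Inl i \<or> (\<exists>k. a = Inr (i, k) \<and> EH k h)"
  using assms by (cases a) auto

lemma E_from_Inr:
  assumes "corona_E VG EG VH EH (Inr (i, h)) b"
  shows "b = Inl i \<or> (\<exists>k. b = Inr (i, k) \<and> EH h k)"
  using assms by (cases b) auto

lemma walk_nthE: "walk V E p \<Longrightarrow> Suc k < length p \<Longrightarrow> E (p!k) (p!Suc k)"
  by (simp add: walk_def)

lemma enters:
  assumes w: "walk V (corona_E VG EG VH EH) p" and nc: "\<forall>h. hd p \<noteq> Inr (i, h)"
  shows "k < length p \<Longrightarrow> p!k = Inr (i, h) \<Longrightarrow> \<exists>i0<k. p!i0 = Inl i"
proof (induction k arbitrary: h)
  case 0
  then have "hd p = Inr (i, h)" using w by (simp add: hd_conv_nth walk_def)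
  then show ?case using nc by blast
next
  case (Suc k)
  have "corona_E VG EG VH EH (p!k) (p!Suc k)" using walk_nthE[OF w] Suc.prems by blast
  then have "p!k = Inl i \<or> (\<exists>k'. p!k = Inr (i, k') \<and> EH k' h)" using Suc.prems(2) E_into_Inr by metis
  then show ?case
  proof
    assume "p!k = Inl i" then show ?thesis by blast
  next
    assume "\<exists>k'. p!k = Inr (i, k') \<and> EH k' h"
    then obtain k' where "p!k = Inr (i, k')" by blast
    then obtain i0 where "i0 < k" "p!i0 = Inl i" using Suc.IH Suc.prems by fastforce
    then show ?thesis by (intro exI[of _ i0]) auto
  qed
qed

lemma idx_mid:
  assumes g: "geodesic V E p y z" and x: "x \<in> set p" "x \<noteq> y" "x \<noteq> z"
  obtains k where "0 < k" "Suc k < length p" "p!k = x"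
proof -
  have w: "walk V E p" "hd p = y" "last p = z" using g by (auto simp: geodesic_def)
  have ne: "p \<noteq> []" using w by (simp add: walk_def)
  obtain k where k: "k < length p" "p!k = x" using x(1) by (auto simp: in_set_conv_nth)
  have "k \<noteq> 0"
  proof
    assume "k = 0" then have "x = hd p" using k ne by (simp add: hd_conv_nth)
    then show False using w x(2) by simp
  qed
  moreover have "Suc k \<noteq> length p"
  proof
    assume "Suc k = length p" then have "x = last p" using k ne by (metis diff_Suc_1 last_conv_nth)
    then show False using w x(3) by simp
  qed
  ultimately show ?thesis using that k by auto
qed

lemma cross_not_on:
  assumes sH: "simple_graph VH EH"
    and g: "geodesic (corona_V VG VH) (corona_E VG EG VH EH) p y z"
    and x: "x = Inr (i, h)" "x \<in> set p" "x \<noteq> z"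
    and y: "\<forall>h'. y \<noteq> Inr (i, h')" "y \<noteq> Inl i"
  shows False
proof -
  let ?E = "corona_E VG EG VH EH" and ?V = "corona_V VG VH"
  have w: "walk ?V ?E p" "hd p = y" "last p = z" using g by (auto simp: geodesic_def)
  have "x \<noteq> y" using x y by auto
  then obtain k where k: "0 < k" "Suc k < length p" "p!k = x" using idx_mid[OF g x(2)] x(3) by metis
  obtain i0 where i0: "i0 < k" "p!i0 = Inl i" using enters[OF w(1), of i k h] w(2) y k x by auto
  have xV: "x \<in> ?V" using w(1) x(2) by (auto simp: walk_def)
  then have iV: "i \<in> VG" using x by (auto simp: corona_V_def)
  have "?E (p!k) (p!Suc k)" using walk_nthE[OF w(1)] k by blast
  then have "p!Suc k = Inl i \<or> (\<exists>k'. p!Suc k = Inr (i, k') \<and> EH h k')" using k x E_from_Inr by metis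
  then show False
  proof
    assume "p!Suc k = Inl i"
    then show False using short_eq[OF w(1), of i0 "Suc k"] i0 k geo_noshort[OF g] by auto
  next
    assume "\<exists>k'. p!Suc k = Inr (i, k') \<and> EH h k'"
    then obtain k' where k': "p!Suc k = Inr (i, k')" "EH h k'" by blast
    have "k' \<in> VH" using sH k'(2) by (auto simp: simple_graph_def)
    then have "?E (p!i0) (p!Suc k)" using i0 k' iV by simp
    then show False using short_adj[OF w(1), of i0 "Suc k"] i0 k geo_noshort[OF g] by auto
  qed
qed

lemma twin_not_on:
  assumes g: "geodesic (corona_V VG VH) (corona_E VG EG VH EH) p y z"
    and x: "x = Inr (i, h)" "x \<in> set p" "x \<noteq> z"
    and y: "y = Inr (i, h')" "h \<noteq> h'"
    and tw: "\<forall>k. EH h k \<longrightarrow> k = h'"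
  shows False
proof -
  let ?E = "corona_E VG EG VH EH" and ?V = "corona_V VG VH"
  have w: "walk ?V ?E p" "hd p = y" "last p = z" using g by (auto simp: geodesic_def)
  have "x \<noteq> y" using x y by auto
  then obtain k where k: "0 < k" "Suc k < length p" "p!k = x" using idx_mid[OF g x(2)] x(3) by metis
  have ne: "p \<noteq> []" using w by (simp add: walk_def)
  have p0: "p!0 = y" using w ne by (simp add: hd_conv_nth)
  have "y \<in> ?V" using w ne by (auto simp: walk_def)
  then have iV: "i \<in> VG" "h' \<in> VH" using y by (auto simp: corona_V_def)
  have "?E (p!k) (p!Suc k)" using walk_nthE[OF w(1)] k by blast
  then have "p!Suc k = Inl i \<or> (\<exists>k'. p!Suc k = Inr (i, k') \<and> EH h k')" using k x E_from_Inr by metis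
  then show False
  proof
    assume "p!Suc k = Inl i"
    then have "?E (p!0) (p!Suc k)" using p0 y iV by simp
    then show False using short_adj[OF w(1), of 0 "Suc k"] k geo_noshort[OF g] by auto
  next
    assume "\<exists>k'. p!Suc k = Inr (i, k') \<and> EH h k'"
    then have "p!Suc k = p!0" using tw p0 y by auto
    then show False using short_eq[OF w(1), of 0 "Suc k"] k geo_noshort[OF g] by auto
  qed
qed

lemma bad_pair:
  assumes "x \<in> V" "y \<in> V" "x \<noteq> y"
    and "\<And>z. z \<noteq> x \<Longrightarrow> z \<noteq> y \<Longrightarrow> \<not> on_geodesic V E x y z \<and> \<not> on_geodesic V E y x z"
  shows "\<forall>S. strong_resolving_set V E S \<longrightarrow> x \<in> S \<or> y \<in> S"
proof (intro allI impI)
  fix S assume "strong_resolving_set V E S"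
  then obtain z where z: "z \<in> S" "on_geodesic V E x y z \<or> on_geodesic V E y x z"
    using assms(1-3) unfolding strong_resolving_set_def by blast
  show "x \<in> S \<or> y \<in> S"
  proof (rule ccontr)
    assume "\<not> (x \<in> S \<or> y \<in> S)"
    then have "z \<noteq> x" "z \<noteq> y" using z by auto
    then show False using assms(4) z(2) by blast
  qed
qed

lemma cross_bad:
  fixes VG :: "'a set" and VH :: "'b set"
  assumes sH: "simple_graph VH EH" and "i \<in> VG" "j \<in> VG" "h \<in> VH" "h' \<in> VH" "i \<noteq> j"
  shows "\<forall>S. strong_resolving_set (corona_V VG VH) (corona_E VG EG VH EH) S \<longrightarrow>
     Inr (i, h) \<in> S \<or> Inr (j, h') \<in> S"
proof (rule bad_pair)
  show "Inr (i, h) \<in> corona_V VG VH" "Inr (j, h') \<in> corona_V VG VH" "Inr (i, h) \<noteq> Inr (j, h')"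
    using assms by (auto simp: corona_V_def)
  fix z :: "'a + 'a \<times> 'b" assume z: "z \<noteq> Inr (i, h)" "z \<noteq> Inr (j, h')"
  show "\<not> on_geodesic (corona_V VG VH) (corona_E VG EG VH EH) (Inr (i, h)) (Inr (j, h')) z \<and>
        \<not> on_geodesic (corona_V VG VH) (corona_E VG EG VH EH) (Inr (j, h')) (Inr (i, h)) z"
    unfolding on_geodesic_def
  proof (intro conjI notI; elim exE conjE)
    fix p assume "geodesic (corona_V VG VH) (corona_E VG EG VH EH) p (Inr (j, h')) z" "Inr (i, h) \<in> set p"
    then show False using cross_not_on[OF sH, of VG EG p "Inr (j, h')" z "Inr (i,h)" i h] z assms by auto
  next
    fix p assume "geodesic (corona_V VG VH) (corona_E VG EG VH EH) p (Inr (i, h)) z" "Inr (j, h') \<in> set p"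
    then show False using cross_not_on[OF sH, of VG EG p "Inr (i, h)" z "Inr (j,h')" j h'] z assms by auto
  qed
qed

lemma twin_bad:
  fixes VG :: "'a set" and VH :: "'b set"
  assumes "i \<in> VG" "h \<in> VH" "h' \<in> VH" "h \<noteq> h'"
    and tw1: "\<forall>k. EH h k \<longrightarrow> k = h'" and tw2: "\<forall>k. EH h' k \<longrightarrow> k = h"
  shows "\<forall>S. strong_resolving_set (corona_V VG VH) (corona_E VG EG VH EH) S \<longrightarrow>
     Inr (i, h) \<in> S \<or> Inr (i, h') \<in> S"
proof (rule bad_pair)
  show "Inr (i, h) \<in> corona_V VG VH" "Inr (i, h') \<in> corona_V VG VH" "Inr (i, h) \<noteq> Inr (i, h')"
    using assms by (auto simp: corona_V_def)
  fix z :: "'a + 'a \<times> 'b" assume z: "z \<noteq> Inr (i, h)" "z \<noteq> Inr (i, h')"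
  show "\<not> on_geodesic (corona_V VG VH) (corona_E VG EG VH EH) (Inr (i, h)) (Inr (i, h')) z \<and>
        \<not> on_geodesic (corona_V VG VH) (corona_E VG EG VH EH) (Inr (i, h')) (Inr (i, h)) z"
    unfolding on_geodesic_def
  proof (intro conjI notI; elim exE conjE)
    fix p assume "geodesic (corona_V VG VH) (corona_E VG EG VH EH) p (Inr (i, h')) z" "Inr (i, h) \<in> set p"
    then show False using twin_not_on[of VG VH EG EH p "Inr (i, h')" z "Inr (i,h)" i h h'] z assms by auto
  next
    fix p assume "geodesic (corona_V VG VH) (corona_E VG EG VH EH) p (Inr (i, h)) z" "Inr (i, h') \<in> set p"
    then show False using twin_not_on[of VG VH EG EH p "Inr (i, h)" z "Inr (i,h')" i h' h] z assms by auto
  qed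
qed

lemma glue_walk:
  assumes "walk V E p" "walk V E q" "last p = hd q"
  shows "walk V E (p @ tl q) \<and> hd (p @ tl q) = hd p \<and> last (p @ tl q) = last q"
proof -
  have p: "p \<noteq> []" "set p \<subseteq> V" "successively E p" and q: "q \<noteq> []" "set q \<subseteq> V" "successively E q"
    using assms by (auto simp: walk_succ)
  obtain a r where qa: "q = a # r" using q(1) by (cases q) auto
  have sr: "successively E r" and ar: "r \<noteq> [] \<Longrightarrow> E a (hd r)" using q(3) qa by (auto simp: successively_Cons)
  have "successively E (p @ r)" unfolding successively_append_iff using p(3) sr ar assms(3) qa by (cases "r = []") auto
  moreover have "set (p @ r) \<subseteq> V" using p q qa by auto
  moreover have "last (p @ r) = last q" using assms(3) qa p by (cases r) auto
  ultimately show ?thesis using p qa by (auto simp: walk_succ)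
qed

lemma map_walk:
  assumes "walk VG EG p"
  shows "walk (corona_V VG VH) (corona_E VG EG VH EH) (map Inl p)"
  using assms by (auto simp: walk_succ successively_map corona_V_def)

lemma corona_walk:
  assumes cG: "connected_graph VG EG"
    and x: "x \<in> corona_V VG VH" and y: "y \<in> corona_V VG VH"
  shows "\<exists>q. walk (corona_V VG VH) (corona_E VG EG VH EH) q \<and> hd q = x \<and> last q = y"
proof -
  let ?V = "corona_V VG VH" and ?E = "corona_E VG EG VH EH"
  have to: "\<exists>u\<in>VG. \<exists>q. walk ?V ?E q \<and> hd q = x \<and> last q = Inl u" if "x \<in> ?V" for x
  proof (cases x)
    case (Inl u) then show ?thesis using that
      by (intro bexI[of _ u] exI[of _ "[x]"]) (auto simp: walk_def corona_V_def)
  next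
    case (Inr uh) then obtain u h where "x = Inr (u, h)" by (cases uh) auto
    then show ?thesis using that
      by (intro bexI[of _ u] exI[of _ "[x, Inl u]"]) (auto simp: walk_def corona_V_def nth_Cons split: nat.splits)
  qed
  have frm: "\<exists>u\<in>VG. \<exists>q. walk ?V ?E q \<and> hd q = Inl u \<and> last q = y" if "y \<in> ?V" for y
  proof (cases y)
    case (Inl u) then show ?thesis using that
      by (intro bexI[of _ u] exI[of _ "[y]"]) (auto simp: walk_def corona_V_def)
  next
    case (Inr uh) then obtain u h where "y = Inr (u, h)" by (cases uh) auto
    then show ?thesis using that
      by (intro bexI[of _ u] exI[of _ "[Inl u, y]"]) (auto simp: walk_def corona_V_def nth_Cons split: nat.splits)
  qed
  obtain u q1 where u: "u \<in> VG" "walk ?V ?E q1" "hd q1 = x" "last q1 = Inl u" using to[OF x] by blast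
  obtain v q3 where v: "v \<in> VG" "walk ?V ?E q3" "hd q3 = Inl v" "last q3 = y" using frm[OF y] by blast
  obtain p where p: "walk VG EG p" "hd p = u" "last p = v" using cG u(1) v(1) unfolding connected_graph_def by blast
  have pn: "p \<noteq> []" using p by (simp add: walk_def)
  have q2: "walk ?V ?E (map Inl p)" "hd (map Inl p) = Inl u" "last (map Inl p) = Inl v"
    using map_walk[OF p(1)] p pn by (auto simp: hd_map last_map)
  obtain r where r: "walk ?V ?E r" "hd r = x" "last r = Inl v"
    using glue_walk[OF u(2) q2(1)] u q2 by metis
  show ?thesis using glue_walk[OF r(1) v(2)] r v by metis
qed

lemma geo_ex:
  assumes "connected_graph VG EG" "x \<in> corona_V VG VH" "y \<in> corona_V VG VH"
  shows "\<exists>p. geodesic (corona_V VG VH) (corona_E VG EG VH EH) p x y"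
proof -
  obtain q where "walk (corona_V VG VH) (corona_E VG EG VH EH) q" "hd q = x" "last q = y"
    using corona_walk[OF assms] by blast
  then show ?thesis by (rule geo_exists)
qed

lemma on_geo_end:
  assumes "connected_graph VG EG" "y \<in> corona_V VG VH" "z \<in> corona_V VG VH"
  shows "on_geodesic (corona_V VG VH) (corona_E VG EG VH EH) z y z"
proof -
  obtain p where p: "geodesic (corona_V VG VH) (corona_E VG EG VH EH) p y z" using geo_ex[OF assms] by blast
  then have "p \<noteq> []" "last p = z" by (auto simp: geodesic_def walk_def)
  then have "z \<in> set p" by auto
  then show ?thesis using p by (auto simp: on_geodesic_def)
qed

lemma bexL: "z \<in> S \<Longrightarrow> P z \<Longrightarrow> \<exists>z\<in>S. P z \<or> Q z" by blast
lemma bexR: "z \<in> S \<Longrightarrow> Q z \<Longrightarrow> \<exists>z\<in>S. P z \<or> Q z" by blast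

context
  fixes VG :: "'a set" and EG and VH :: "'b set" and EH and h :: 'b
  assumes sH: "simple_graph VH EH" and VH: "VH = {h}" and cG: "connected_graph VG EG"
begin

lemma leaf_nb_out: "corona_E VG EG VH EH (Inr (v, h)) b \<Longrightarrow> b = Inl v"
proof -
  assume a: "corona_E VG EG VH EH (Inr (v, h)) b"
  have "\<not> EH h k" for k using sH VH unfolding simple_graph_def by blast
  then show ?thesis using E_from_Inr[OF a] by blast
qed

lemma leaf_nb_in: "corona_E VG EG VH EH a (Inr (v, h)) \<Longrightarrow> a = Inl v"
proof -
  assume a: "corona_E VG EG VH EH a (Inr (v, h))"
  have "\<not> EH k h" for k using sH VH unfolding simple_graph_def by blast
  then show ?thesis using E_into_Inr[OF a] by blast
qed

lemma on_geo_to_leaf: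
  assumes "y \<in> corona_V VG VH" "v \<in> VG" "y \<noteq> Inr (v, h)"
  shows "on_geodesic (corona_V VG VH) (corona_E VG EG VH EH) (Inl v) y (Inr (v, h))"
proof -
  have lv: "Inr (v, h) \<in> corona_V VG VH" using assms VH by (auto simp: corona_V_def)
  obtain p where g: "geodesic (corona_V VG VH) (corona_E VG EG VH EH) p y (Inr (v, h))"
    using geo_ex[OF cG assms(1) lv] by blast
  have w: "walk (corona_V VG VH) (corona_E VG EG VH EH) p" "hd p = y" "last p = Inr (v,h)"
    using g by (auto simp: geodesic_def)
  have ne: "p \<noteq> []" using w by (simp add: walk_def)
  have "length p \<noteq> 1"
  proof
    assume "length p = 1" then obtain a where "p = [a]" by (cases p) (auto simp: length_Suc_conv)
    then show False using w assms(3) by simp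
  qed
  moreover have "length p \<noteq> 0" using ne by simp
  ultimately have l2: "Suc (length p - 2) < length p" "Suc (length p - 2) = length p - 1" by arith+
  have "corona_E VG EG VH EH (p ! (length p - 2)) (p ! Suc (length p - 2))" using walk_nthE[OF w(1) l2(1)] .
  moreover have "p ! Suc (length p - 2) = Inr (v, h)" using l2(2) w(3) ne by (simp add: last_conv_nth)
  ultimately have "p ! (length p - 2) = Inl v" using leaf_nb_in by metis
  then have "Inl v \<in> set p" using l2 by (metis Suc_lessD nth_mem)
  then show ?thesis using g by (auto simp: on_geodesic_def)
qed

lemma on_geo_from_leaf:
  assumes "z \<in> corona_V VG VH" "w \<in> VG" "z \<noteq> Inr (w, h)"
  shows "on_geodesic (corona_V VG VH) (corona_E VG EG VH EH) (Inl w) (Inr (w, h)) z"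
proof -
  have lw: "Inr (w, h) \<in> corona_V VG VH" using assms VH by (auto simp: corona_V_def)
  obtain p where g: "geodesic (corona_V VG VH) (corona_E VG EG VH EH) p (Inr (w, h)) z"
    using geo_ex[OF cG lw assms(1)] by blast
  have wk: "walk (corona_V VG VH) (corona_E VG EG VH EH) p" "hd p = Inr (w,h)" "last p = z"
    using g by (auto simp: geodesic_def)
  have ne: "p \<noteq> []" using wk by (simp add: walk_def)
  have "length p \<noteq> 1"
  proof
    assume "length p = 1" then obtain a where "p = [a]" by (cases p) (auto simp: length_Suc_conv)
    then show False using wk assms(3) by simp
  qed
  then have l1: "Suc 0 < length p" using ne by (cases p) auto
  have "corona_E VG EG VH EH (p ! 0) (p ! Suc 0)" using walk_nthE[OF wk(1) l1] .
  moreover have "p ! 0 = Inr (w, h)" using wk(2) ne by (simp add: hd_conv_nth)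
  ultimately have "p ! Suc 0 = Inl w" using leaf_nb_out by metis
  then have "Inl w \<in> set p" using l1 by (metis nth_mem)
  then show ?thesis using g by (auto simp: on_geodesic_def)
qed

lemma maker_set:
  assumes w: "w \<in> VG" and t: "t \<in> VG" "t \<noteq> w"
  shows "strong_resolving_set (corona_V VG VH) (corona_E VG EG VH EH) (Inr ` (VG \<times> VH) - {Inr (w, h)})"
proof -
  let ?V = "corona_V VG VH" and ?E = "corona_E VG EG VH EH"
  let ?S = "Inr ` (VG \<times> VH) - {Inr (w, h)}"
  have cls: "x \<in> ?S \<or> (\<exists>u\<in>VG. x = Inl u) \<or> x = Inr (w, h)" if "x \<in> ?V" for x
    using that VH by (auto simp: corona_V_def)
  have key: "\<exists>z\<in>?S. on_geodesic ?V ?E x y z \<or> on_geodesic ?V ?E y x z"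
    if xy: "x \<in> ?V" "y \<in> ?V" "x \<noteq> y" "x \<notin> ?S" "y \<notin> ?S" "\<exists>u\<in>VG. x = Inl u" for x y
  proof -
    obtain u where u: "u \<in> VG" "x = Inl u" using xy(6) by blast
    consider "\<exists>v\<in>VG. y = Inl v" | "y = Inr (w, h)" using cls[OF xy(2)] xy(5) by blast
    then show ?thesis
    proof cases
      case 1
      then obtain v where v: "v \<in> VG" "y = Inl v" by blast
      show ?thesis
      proof (cases "v = w")
        case False
        have "Inr (v, h) \<in> ?S" using v False VH by auto
        moreover have "on_geodesic ?V ?E y x (Inr (v, h))" using on_geo_to_leaf[OF xy(1) v(1)] u v by simp
        ultimately show ?thesis by (rule bexR)
      next
        case True
        then have "u \<noteq> w" using u v xy(3) by auto
        then have "Inr (u, h) \<in> ?S" using u VH by auto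
        moreover have "on_geodesic ?V ?E x y (Inr (u, h))" using on_geo_to_leaf[OF xy(2) u(1)] u v by simp
        ultimately show ?thesis by (rule bexL)
      qed
    next
      case 2
      show ?thesis
      proof (cases "u = w")
        case True
        have "Inr (t, h) \<in> ?S" using t VH by auto
        moreover have "Inr (t, h) \<in> ?V" using t VH by (auto simp: corona_V_def)
        then have "on_geodesic ?V ?E x y (Inr (t, h))" using on_geo_from_leaf[of "Inr (t,h)" w] w t u True 2 by auto
        ultimately show ?thesis by (rule bexL)
      next
        case False
        then have "Inr (u, h) \<in> ?S" using u VH by auto
        moreover have "on_geodesic ?V ?E x y (Inr (u, h))" using on_geo_to_leaf[OF xy(2) u(1)] u 2 False by simp
        ultimately show ?thesis by (rule bexL)
      qed
    qed
  qed
  show ?thesis unfolding strong_resolving_set_def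
  proof (intro conjI ballI impI)
    show "?S \<subseteq> ?V" by (auto simp: corona_V_def)
  next
    fix x y assume xy: "x \<in> ?V" "y \<in> ?V" "x \<noteq> y"
    show "\<exists>z\<in>?S. on_geodesic ?V ?E x y z \<or> on_geodesic ?V ?E y x z"
    proof (cases "x \<in> ?S \<or> y \<in> ?S")
      case True
      then show ?thesis using on_geo_end[OF cG xy(1) xy(2)] on_geo_end[OF cG xy(2) xy(1)] by blast
    next
      case False
      then have nx: "x \<notin> ?S" "y \<notin> ?S" by auto
      consider "\<exists>u\<in>VG. x = Inl u" | "\<exists>u\<in>VG. y = Inl u" using cls xy nx by blast
      then show ?thesis
      proof cases
        case 1 then show ?thesis using key[OF xy nx 1] by blast
      next
        case 2
        have "\<exists>z\<in>?S. on_geodesic ?V ?E y x z \<or> on_geodesic ?V ?E x y z"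
          using key[OF xy(2) xy(1) _ nx(2) nx(1) 2] xy(3) by metis
        then show ?thesis by blast
      qed
    qed
  qed
qed

end

lemma mw_T: "maker_wins (Suc n) True W X M B \<longleftrightarrow> (\<exists>x\<in>X-(M\<union>B). maker_wins n False W X (insert x M) B)"
  by simp
lemma mw_F: "maker_wins (Suc n) False W X M B \<longleftrightarrow> (\<forall>x\<in>X-(M\<union>B). maker_wins n True W X M (insert x B))"
  by simp

lemma free_insert:
  assumes "finite X" "x \<in> X - (M \<union> B)" "card (X - (M \<union> B)) = Suc k"
  shows "card (X - (insert x M \<union> B)) = k" "card (X - (M \<union> insert x B)) = k"
proof -
  have "X - (insert x M \<union> B) = (X - (M \<union> B)) - {x}" "X - (M \<union> insert x B) = (X - (M \<union> B)) - {x}" by auto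
  then show "card (X - (insert x M \<union> B)) = k" "card (X - (M \<union> insert x B)) = k"
    using assms by (simp_all add: card_Diff_singleton)
qed

lemma free_nonempty: "card (X - (M \<union> B)) = Suc k \<Longrightarrow> \<exists>x. x \<in> X - (M \<union> B)"
  by (metis card.empty ex_in_conv nat.distinct(1))

lemma breaker_won:
  assumes fin: "finite X" and xy: "x \<in> B" "y \<in> B" and bad: "\<forall>S. W S \<longrightarrow> x \<in> S \<or> y \<in> S"
  shows "card (X - (M \<union> B)) = k \<Longrightarrow> M \<inter> B = {} \<Longrightarrow> \<not> maker_wins k t W X M B"
  using xy
proof (induction k arbitrary: M B t)
  case 0
  show ?case
  proof
    assume "maker_wins 0 t W X M B"
    then obtain S where "S \<subseteq> M" "W S" by auto
    then show False using bad 0 by blast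
  qed
next
  case (Suc k)
  show ?case
  proof (cases t)
    case True
    have "\<not> maker_wins k False W X (insert z M) B" if z: "z \<in> X - (M \<union> B)" for z
      using Suc.IH[of "insert z M" B False] free_insert[OF fin z Suc.prems(1)] Suc.prems z by blast
    then show ?thesis using True by simp
  next
    case False
    obtain z where z: "z \<in> X - (M \<union> B)" using free_nonempty[OF Suc.prems(1)] by blast
    have "\<not> maker_wins k True W X M (insert z B)"
      using Suc.IH[of M "insert z B" True] free_insert[OF fin z Suc.prems(1)] Suc.prems z by blast
    then show ?thesis using False z by auto
  qed
qed

lemma maker_greedy:
  assumes fin: "finite X" and LX: "L \<subseteq> X" and win: "\<forall>M'. card (L - M') \<le> 1 \<longrightarrow> (\<exists>S\<subseteq>M'. W S)"
  shows "card (X - (M \<union> B)) = k \<Longrightarrow>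
    (if t then card (B \<inter> L) + card ((X - (M \<union> B)) \<inter> L) div 2 \<le> 1
     else card (B \<inter> L) + (card ((X - (M \<union> B)) \<inter> L) + 1) div 2 \<le> 1) \<Longrightarrow> maker_wins k t W X M B"
proof (induction k arbitrary: M B t)
  case 0
  have fe: "X - (M \<union> B) = {}" using 0 fin by simp
  then have "L - M \<subseteq> B \<inter> L" using LX by blast
  moreover have "card (B \<inter> L) \<le> 1" using 0 fe by (cases t) auto
  moreover have "finite (B \<inter> L)" using LX fin finite_subset by blast
  ultimately have "card (L - M) \<le> 1" by (meson card_mono le_trans)
  then show ?case using win by simp
next
  case (Suc k)
  let ?F = "X - (M \<union> B)"
  have fF: "finite (?F \<inter> L)" "finite (B \<inter> L)" using fin LX finite_subset by blast+
  show ?case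
  proof (cases t)
    case True
    then have inv: "card (B \<inter> L) + card (?F \<inter> L) div 2 \<le> 1" using Suc.prems by simp
    show ?thesis
    proof (cases "?F \<inter> L = {}")
      case False
      then obtain z where z: "z \<in> ?F" "z \<in> L" by blast
      have e: "(X - (insert z M \<union> B)) \<inter> L = (?F \<inter> L) - {z}" by auto
      have c: "card (?F \<inter> L) \<ge> 1" using z fF by (metis One_nat_def Suc_leI card_gt_0_iff emptyE IntI)
      have "card ((X - (insert z M \<union> B)) \<inter> L) = card (?F \<inter> L) - 1" unfolding e using z fF by simp
      then have "maker_wins k False W X (insert z M) B"
        using Suc.IH[of "insert z M" B False] free_insert[OF fin _ Suc.prems(1), of z] z inv c by simp
      moreover have "t = True" using \<open>t\<close> by simp
      ultimately show ?thesis using z by (simp only: mw_T) blast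
    next
      case True
      obtain z where z: "z \<in> ?F" using free_nonempty[OF Suc.prems(1)] by blast
      have e: "(X - (insert z M \<union> B)) \<inter> L = {}" using True by auto
      have "maker_wins k False W X (insert z M) B"
        using Suc.IH[of "insert z M" B False] free_insert[OF fin z Suc.prems(1)] inv e True by simp
      moreover have "t = True" using \<open>t\<close> by simp
      ultimately show ?thesis using z by (simp only: mw_T) blast
    qed
  next
    case False
    then have inv: "card (B \<inter> L) + (card (?F \<inter> L) + 1) div 2 \<le> 1" using Suc.prems by simp
    have "maker_wins k True W X M (insert z B)" if z: "z \<in> ?F" for z
    proof (cases "z \<in> L")
      case True
      have e1: "(X - (M \<union> insert z B)) \<inter> L = (?F \<inter> L) - {z}" by auto
      have e2: "insert z B \<inter> L = insert z (B \<inter> L)" using True by auto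
      have c: "card (?F \<inter> L) \<ge> 1" using z True fF by (metis One_nat_def Suc_leI card_gt_0_iff emptyE IntI)
      have c1: "card ((X - (M \<union> insert z B)) \<inter> L) = card (?F \<inter> L) - 1" unfolding e1 using z True fF by simp
      have c2: "card (insert z B \<inter> L) = Suc (card (B \<inter> L))" unfolding e2 using z fF by simp
      have "card (insert z B \<inter> L) + card ((X - (M \<union> insert z B)) \<inter> L) div 2 \<le> 1"
        unfolding c1 c2 using inv c by (cases "card (?F \<inter> L)") auto
      then show ?thesis using Suc.IH[of M "insert z B" True] free_insert[OF fin z Suc.prems(1)] by simp
    next
      case False
      have e1: "(X - (M \<union> insert z B)) \<inter> L = (?F \<inter> L)" using False z by auto
      have e2: "insert z B \<inter> L = B \<inter> L" using False by auto
      have "card (insert z B \<inter> L) + card ((X - (M \<union> insert z B)) \<inter> L) div 2 \<le> 1"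
        unfolding e1 e2 using inv by linarith
      then show ?thesis using Suc.IH[of M "insert z B" True] free_insert[OF fin z Suc.prems(1)] by simp
    qed
    moreover have "t = False" using \<open>\<not> t\<close> by simp
    ultimately show ?thesis by (simp only: mw_F) blast
  qed
qed

lemma breaker_M:
  assumes fin: "finite X" and cX: "4 \<le> card X" and CX: "C \<subseteq> X" and cC: "2 \<le> card C"
    and P: "\<forall>y\<in>C. P y \<subseteq> X \<and> y \<notin> P y \<and> 3 \<le> card (P y) \<and> (\<forall>y'\<in>P y. \<forall>S. W S \<longrightarrow> y \<in> S \<or> y' \<in> S)"
  shows "\<not> maker_wins (card X) True W X {} {}"
proof -
  have "\<exists>k. card X = Suc (Suc (Suc (Suc k)))" using cX by presburger
  then obtain k where k: "card X = Suc (Suc (Suc (Suc k)))" by blast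
  have "\<not> maker_wins (Suc (Suc (Suc k))) False W X {x1} {}" if x1: "x1 \<in> X" for x1
  proof -
    have "finite C" using fin CX finite_subset by blast
    have "\<exists>y1. y1 \<in> C \<and> y1 \<noteq> x1"
    proof (rule ccontr)
      assume "\<not> ?thesis" then have "C \<subseteq> {x1}" by blast
      then have "card C \<le> 1" using card_mono[of "{x1}" C] by simp
      then show False using cC by simp
    qed
    then obtain y1 where y1: "y1 \<in> C" "y1 \<noteq> x1" by blast
    have "\<not> maker_wins (Suc k) False W X (insert x2 {x1}) {y1}" if x2: "x2 \<in> X - ({x1} \<union> {y1})" for x2
    proof -
      have Py: "P y1 \<subseteq> X" "y1 \<notin> P y1" "3 \<le> card (P y1)" "\<forall>y'\<in>P y1. \<forall>S. W S \<longrightarrow> y1 \<in> S \<or> y' \<in> S"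
        using P y1 by auto
      have "finite (P y1)" using Py fin finite_subset by blast
      have "\<exists>y2. y2 \<in> P y1 \<and> y2 \<noteq> x1 \<and> y2 \<noteq> x2"
      proof (rule ccontr)
        assume "\<not> ?thesis" then have "P y1 \<subseteq> {x1, x2}" by blast
        then have "card (P y1) \<le> card {x1, x2}" using card_mono[of "{x1,x2}" "P y1"] by simp
        moreover have "card {x1, x2} \<le> 2" by (cases "x1 = x2") auto
        ultimately show False using Py(3) by simp
      qed
      then obtain y2 where y2: "y2 \<in> P y1" "y2 \<noteq> x1" "y2 \<noteq> x2" by blast
      have y2X: "y2 \<in> X" "y2 \<noteq> y1" using y2 Py by auto
      have cc: "card (X - ({x2, x1} \<union> {y2, y1})) = k"
      proof -
        have "card {x2, x1, y2, y1} = 4" using x2 y1 y2 y2X by auto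
        moreover have "{x2, x1, y2, y1} \<subseteq> X" using x1 x2 y1 y2X CX by auto
        ultimately show ?thesis using k fin by (simp add: card_Diff_subset insert_commute)
      qed
      have bd: "\<forall>S. W S \<longrightarrow> y1 \<in> S \<or> y2 \<in> S" using Py(4) y2 by blast
      have dj: "{x2, x1} \<inter> {y2, y1} = {}" using y2 x2 y1 y2X by auto
      have "\<not> maker_wins k True W X {x2, x1} {y2, y1}"
        using breaker_won[OF fin _ _ bd cc dj] by simp
      moreover have "y2 \<in> X - ({x2, x1} \<union> {y1})" using y2 y2X by auto
      ultimately show ?thesis by (subst mw_F) blast
    qed
    then have "\<not> maker_wins (Suc (Suc k)) True W X {x1} {y1}" by (subst mw_T) blast
    moreover have "y1 \<in> X - ({x1} \<union> {})" using y1 CX by auto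
    ultimately show ?thesis by (subst mw_F) blast
  qed
  then show ?thesis unfolding k by (subst mw_T) blast
qed

lemma breaker_B:
  assumes fin: "finite X" and cX: "3 \<le> card X" and CX: "C \<subseteq> X" and cC: "C \<noteq> {}"
    and P: "\<forall>y\<in>C. P y \<subseteq> X \<and> y \<notin> P y \<and> 2 \<le> card (P y) \<and> (\<forall>y'\<in>P y. \<forall>S. W S \<longrightarrow> y \<in> S \<or> y' \<in> S)"
  shows "\<not> maker_wins (card X) False W X {} {}"
proof -
  have "\<exists>k. card X = Suc (Suc (Suc k))" using cX by presburger
  then obtain k where k: "card X = Suc (Suc (Suc k))" by blast
  obtain y1 where y1: "y1 \<in> C" using cC by blast
  have Py: "P y1 \<subseteq> X" "y1 \<notin> P y1" "2 \<le> card (P y1)" "\<forall>y'\<in>P y1. \<forall>S. W S \<longrightarrow> y1 \<in> S \<or> y' \<in> S"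
    using P y1 by auto
  have "\<not> maker_wins (Suc k) False W X {x1} {y1}" if x1: "x1 \<in> X - ({} \<union> {y1})" for x1
  proof -
    have "finite (P y1)" using Py fin finite_subset by blast
    have "P y1 - {x1} \<noteq> {}"
    proof
      assume "P y1 - {x1} = {}" then have "P y1 \<subseteq> {x1}" by blast
      then have "card (P y1) \<le> 1" using card_mono[of "{x1}" "P y1"] by simp
      then show False using Py(3) by simp
    qed
    then obtain y2 where y2: "y2 \<in> P y1" "y2 \<noteq> x1" by blast
    have y2X: "y2 \<in> X" "y2 \<noteq> y1" using y2 Py by auto
    have cc: "card (X - ({x1} \<union> {y2, y1})) = k"
    proof -
      have "card {x1, y2, y1} = 3" using x1 y1 y2 y2X by auto
      moreover have "{x1, y2, y1} \<subseteq> X" using x1 y1 y2X CX by auto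
      ultimately show ?thesis using k fin by (simp add: card_Diff_subset insert_commute)
    qed
    have bd: "\<forall>S. W S \<longrightarrow> y1 \<in> S \<or> y2 \<in> S" using Py(4) y2 by blast
    have dj: "{x1} \<inter> {y2, y1} = {}" using y2 x1 y2X by auto
    have "\<not> maker_wins k True W X {x1} {y2, y1}"
      using breaker_won[OF fin _ _ bd cc dj] by simp
    moreover have "y2 \<in> X - ({x1} \<union> {y1})" using y2 y2X by auto
    ultimately show ?thesis by (subst mw_F) blast
  qed
  then have "\<not> maker_wins (Suc (Suc k)) True W X {} {y1}" by (subst mw_T) blast
  moreover have "y1 \<in> X - ({} \<union> {})" using y1 CX by auto
  ultimately show ?thesis unfolding k by (subst mw_F) blast
qed

lemma card_corona:
  assumes "finite VG" "finite VH"
  shows "card (corona_V VG VH) = card VG + card VG * card VH"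
proof -
  have "card (Inl ` VG \<union> Inr ` (VG \<times> VH)) = card (Inl ` VG :: ('a + 'a \<times> 'b) set) + card (Inr ` (VG \<times> VH) :: ('a + 'a \<times> 'b) set)"
  proof -
    have d: "Inl ` VG \<inter> Inr ` (VG \<times> VH) = {}" by blast
    show ?thesis using card_Un_disjoint[OF _ _ d] assms by simp
  qed
  moreover have "card (Inl ` VG :: ('a + 'a \<times> 'b) set) = card VG" by (rule card_image) (simp add: inj_on_def)
  moreover have "card (Inr ` (VG \<times> VH) :: ('a + 'a \<times> 'b) set) = card VG * card VH"
    by (subst card_image) (auto simp: inj_on_def card_cartesian_product)
  ultimately show ?thesis unfolding corona_V_def by simp
qed

lemma card_Inr: "card (Inr ` (A \<times> B) :: ('a + 'a \<times> 'b) set) = card A * card B"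
  by (subst card_image) (auto simp: inj_on_def card_cartesian_product)

context
  fixes VG :: "'a set" and EG and VH :: "'b set" and EH
  assumes sG: "simple_graph VG EG" and cG: "connected_graph VG EG" and sH: "simple_graph VH EH"
    and n2: "card VG \<ge> 2" and m1: "card VH \<ge> 1"
begin

abbreviation "XX \<equiv> corona_V VG VH"
abbreviation "WW \<equiv> strong_resolving_set (corona_V VG VH) (corona_E VG EG VH EH)"

lemma finG: "finite VG" using sG by (simp add: simple_graph_def)
lemma finH: "finite VH" using sH by (simp add: simple_graph_def)
lemma finX: "finite XX" using finG finH by (simp add: corona_V_def)
lemma cardX: "card XX = card VG + card VG * card VH" using card_corona[OF finG finH] .

definition PC :: "'a + 'a \<times> 'b \<Rightarrow> ('a + 'a \<times> 'b) set" where
  "PC y = (case y of Inl _ \<Rightarrow> {} | Inr (i, h) \<Rightarrow> Inr ` ((VG - {i}) \<times> VH))"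

lemma PC_props:
  assumes "y \<in> Inr ` (VG \<times> VH)"
  shows "PC y \<subseteq> XX \<and> y \<notin> PC y \<and> card (PC y) = (card VG - 1) * card VH \<and>
    (\<forall>y'\<in>PC y. \<forall>S. WW S \<longrightarrow> y \<in> S \<or> y' \<in> S)"
proof -
  obtain i h where y: "y = Inr (i, h)" "i \<in> VG" "h \<in> VH" using assms by auto
  have P: "PC y = Inr ` ((VG - {i}) \<times> VH)" using y by (simp add: PC_def)
  have c: "card (PC y) = (card VG - 1) * card VH" unfolding P card_Inr using y finG by simp
  have b: "\<forall>y'\<in>PC y. \<forall>S. WW S \<longrightarrow> y \<in> S \<or> y' \<in> S"
  proof
    fix y' assume "y' \<in> PC y"
    then obtain j h' where "y' = Inr (j, h')" "j \<in> VG" "j \<noteq> i" "h' \<in> VH" using P by auto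
    then show "\<forall>S. WW S \<longrightarrow> y \<in> S \<or> y' \<in> S" using cross_bad[OF sH, of i VG j h h' EG] y by auto
  qed
  show ?thesis using P c b y by (auto simp: corona_V_def)
qed

lemma cross_M:
  assumes "(card VG - 1) * card VH \<ge> 3"
  shows "\<not> maker_wins_M_game WW XX"
  unfolding maker_wins_M_game_def
proof (rule breaker_M[OF finX, where C = "Inr ` (VG \<times> VH)" and P = PC])
  have "card VG * card VH \<ge> card VG" using m1 by (metis mult_le_mono2 mult.right_neutral)
  then show "4 \<le> card XX" using cardX n2 by linarith
  show "Inr ` (VG \<times> VH) \<subseteq> XX" by (auto simp: corona_V_def)
  have "card VG * card VH \<ge> card VG" using m1 by (metis mult_le_mono2 mult.right_neutral)
  then have "card VG * card VH \<ge> 2" using n2 by linarith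
  then show "2 \<le> card (Inr ` (VG \<times> VH) :: ('a + 'a \<times> 'b) set)" unfolding card_Inr .
  show "\<forall>y\<in>Inr ` (VG \<times> VH). PC y \<subseteq> XX \<and> y \<notin> PC y \<and> 3 \<le> card (PC y) \<and>
      (\<forall>y'\<in>PC y. \<forall>S. WW S \<longrightarrow> y \<in> S \<or> y' \<in> S)" using PC_props assms by auto
qed

lemma cross_B:
  assumes "(card VG - 1) * card VH \<ge> 2"
  shows "\<not> maker_wins_B_game WW XX"
  unfolding maker_wins_B_game_def
proof (rule breaker_B[OF finX, where C = "Inr ` (VG \<times> VH)" and P = PC])
  have "card VG * card VH \<ge> card VG" using m1 by (metis mult_le_mono2 mult.right_neutral)
  then show "3 \<le> card XX" using cardX n2 by linarith
  show "Inr ` (VG \<times> VH) \<subseteq> XX" by (auto simp: corona_V_def)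
  have "VG \<noteq> {}" "VH \<noteq> {}" using n2 m1 by auto
  then show "Inr ` (VG \<times> VH) \<noteq> {}" by auto
  show "\<forall>y\<in>Inr ` (VG \<times> VH). PC y \<subseteq> XX \<and> y \<notin> PC y \<and> 2 \<le> card (PC y) \<and>
      (\<forall>y'\<in>PC y. \<forall>S. WW S \<longrightarrow> y \<in> S \<or> y' \<in> S)" using PC_props assms by auto
qed

definition PT :: "'a + 'a \<times> 'b \<Rightarrow> ('a + 'a \<times> 'b) set" where
  "PT y = (case y of Inl _ \<Rightarrow> {} | Inr (i, h) \<Rightarrow> Inr ` ((VG - {i}) \<times> VH) \<union> Inr ` ({i} \<times> (VH - {h})))"

lemma twin_M:
  assumes n: "card VG = 2" and m: "card VH = 2"
  shows "\<not> maker_wins_M_game WW XX"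
  unfolding maker_wins_M_game_def
proof (rule breaker_M[OF finX, where C = "Inr ` (VG \<times> VH)" and P = PT])
  show "4 \<le> card XX" using cardX n m by simp
  show "Inr ` (VG \<times> VH) \<subseteq> XX" by (auto simp: corona_V_def)
  show "2 \<le> card (Inr ` (VG \<times> VH) :: ('a + 'a \<times> 'b) set)" unfolding card_Inr using n m by simp
  show "\<forall>y\<in>(Inr ` (VG \<times> VH) :: ('a + 'a \<times> 'b) set). PT y \<subseteq> XX \<and> y \<notin> PT y \<and> 3 \<le> card (PT y) \<and>
      (\<forall>y'\<in>PT y. \<forall>S. WW S \<longrightarrow> y \<in> S \<or> y' \<in> S)"
  proof
    fix y :: "'a + 'a \<times> 'b" assume "y \<in> Inr ` (VG \<times> VH)"
    then obtain i h where y: "y = Inr (i, h)" "i \<in> VG" "h \<in> VH" by auto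
    obtain h' where h': "VH = {h, h'}" "h \<noteq> h'"
    proof -
      obtain a b where ab: "VH = {a, b}" "a \<noteq> b" using m by (auto simp: card_2_iff)
      show ?thesis
      proof (cases "h = a")
        case True then show ?thesis using that ab by blast
      next
        case False then have "h = b" using y(3) ab by auto
        then show ?thesis using that ab by (metis insert_commute)
      qed
    qed
    have P: "PT y = Inr ` ((VG - {i}) \<times> VH) \<union> Inr ` ({i} \<times> (VH - {h}))" using y by (simp add: PT_def)
    have "card (PT y) = card (Inr ` ((VG - {i}) \<times> VH) :: ('a + 'a \<times> 'b) set) + card (Inr ` ({i} \<times> (VH - {h})) :: ('a + 'a \<times> 'b) set)"
      unfolding P using finG finH by (intro card_Un_disjoint) auto
    also have "\<dots> = 3" unfolding card_Inr using n m y finG finH by simp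
    finally have c: "card (PT y) = 3" .
    have irr: "\<forall>k. EH h k \<longrightarrow> k = h'" "\<forall>k. EH h' k \<longrightarrow> k = h" using sH h' unfolding simple_graph_def by blast+
    have b: "\<forall>y'\<in>PT y. \<forall>S. WW S \<longrightarrow> y \<in> S \<or> y' \<in> S"
    proof
      fix y' assume "y' \<in> PT y"
      then consider (a) j h'' where "y' = Inr (j, h'')" "j \<in> VG" "j \<noteq> i" "h'' \<in> VH" | (b) "y' = Inr (i, h')"
        using P h' by auto
      then show "\<forall>S. WW S \<longrightarrow> y \<in> S \<or> y' \<in> S"
      proof cases
        case a then show ?thesis using cross_bad[OF sH, of i VG j h h'' EG] y by auto
      next
        case b then show ?thesis using twin_bad[of i VG h VH h' EH EG] y h' irr by auto
      qed
    qed
    show "PT y \<subseteq> XX \<and> y \<notin> PT y \<and> 3 \<le> card (PT y) \<and> (\<forall>y'\<in>PT y. \<forall>S. WW S \<longrightarrow> y \<in> S \<or> y' \<in> S)"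
      using P c b y by (auto simp: corona_V_def)
  qed
qed

lemma maker_m1_win:
  assumes m: "card VH = 1"
    and c: "if t then card VG div 2 \<le> 1 else (card VG + 1) div 2 \<le> 1"
  shows "maker_wins (card XX) t WW XX {} {}"
proof -
  obtain h where VH: "VH = {h}" using m by (metis card_1_singletonE)
  let ?L = "Inr ` (VG \<times> VH) :: ('a + 'a \<times> 'b) set"
  have LX: "?L \<subseteq> XX" by (auto simp: corona_V_def)
  have cL: "card ?L = card VG" unfolding card_Inr using m by simp
  have win: "\<forall>M'. card (?L - M') \<le> 1 \<longrightarrow> (\<exists>S\<subseteq>M'. WW S)"
  proof (intro allI impI)
    fix M' assume cM: "card (?L - M') \<le> 1"
    have "finite ?L" using finG finH by simp
    then have fin: "finite (?L - M')" by simp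
    obtain w where w: "w \<in> VG" "?L - M' \<subseteq> {Inr (w, h)}"
    proof (cases "?L - M' = {}")
      case True
      obtain w where "w \<in> VG" using n2 by (metis card.empty ex_in_conv not_numeral_le_zero)
      then show ?thesis using that True by blast
    next
      case False
      then have "card (?L - M') = 1" using cM fin by (simp add: Suc_le_eq card_gt_0_iff le_antisym)
      then obtain l where l: "?L - M' = {l}" by (metis card_1_singletonE)
      then obtain w where "l = Inr (w, h)" "w \<in> VG" using VH by auto
      then show ?thesis using that l by blast
    qed
    obtain t where t: "t \<in> VG" "t \<noteq> w"
    proof -
      have "\<not> VG \<subseteq> {w}"
      proof
        assume "VG \<subseteq> {w}" then have "card VG \<le> 1" using card_mono[of "{w}" VG] by simp
        then show False using n2 by simp
      qed
      then show ?thesis using that by blast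
    qed
    have "WW (?L - {Inr (w, h)})" using maker_set[OF sH VH cG w(1) t] VH by simp
    moreover have "?L - {Inr (w, h)} \<subseteq> M'" using w(2) by blast
    ultimately show "\<exists>S\<subseteq>M'. WW S" by blast
  qed
  have e: "(XX - ({} \<union> {})) \<inter> ?L = ?L" using LX by auto
  have "(if t then card ({} \<inter> ?L) + card ((XX - ({} \<union> {})) \<inter> ?L) div 2 \<le> 1
     else card ({} \<inter> ?L) + (card ((XX - ({} \<union> {})) \<inter> ?L) + 1) div 2 \<le> 1)"
    unfolding e cL using c by (cases t) simp_all
  then show ?thesis
    using maker_greedy[OF finX LX win, of "{}" "{}" "card XX" t] by simp
qed

end

theorem mainTheorem9:
  fixes VG :: "'a set" and EG :: "'a \<Rightarrow> 'a \<Rightarrow> bool"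
    and VH :: "'b set" and EH :: "'b \<Rightarrow> 'b \<Rightarrow> bool"
  assumes "simple_graph VG EG" and "connected_graph VG EG"
    and "simple_graph VH EH"
    and "card VG \<ge> 2" and "card VH \<ge> 1"
  shows "(card VG \<ge> 4 \<longrightarrow>
            O_SR (corona_V VG VH) (corona_E VG EG VH EH) = Out_B)
       \<and> (card VG = 3 \<longrightarrow>
            (card VH = 1 \<longrightarrow> O_SR (corona_V VG VH) (corona_E VG EG VH EH) = Out_N)
          \<and> (card VH \<ge> 2 \<longrightarrow> O_SR (corona_V VG VH) (corona_E VG EG VH EH) = Out_B))
       \<and> (card VG = 2 \<longrightarrow>
            (card VH = 1 \<longrightarrow> O_SR (corona_V VG VH) (corona_E VG EG VH EH) = Out_M)
          \<and> (card VH \<ge> 2 \<longrightarrow> O_SR (corona_V VG VH) (corona_E VG EG VH EH) = Out_B))"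
proof -
  let ?X = "corona_V VG VH" and ?W = "strong_resolving_set (corona_V VG VH) (corona_E VG EG VH EH)"
  have O: "O_SR ?X (corona_E VG EG VH EH) =
    (if maker_wins_M_game ?W ?X \<and> maker_wins_B_game ?W ?X then Out_M
     else if \<not> maker_wins_M_game ?W ?X \<and> \<not> maker_wins_B_game ?W ?X then Out_B
     else if maker_wins_M_game ?W ?X \<and> \<not> maker_wins_B_game ?W ?X then Out_N
     else Out_P)" unfolding O_SR_def game_outcome_def ..
  note cM = cross_M[OF assms] and cB = cross_B[OF assms] and tM = twin_M[OF assms]
    and mk = maker_m1_win[OF assms]
  have pm: "(card VG - 1) * card VH \<ge> card VG - 1" using assms(5) by (metis mult_le_mono2 mult.right_neutral)
  have A: "O_SR ?X (corona_E VG EG VH EH) = Out_B" if "card VG \<ge> 4"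
  proof -
    have "\<not> maker_wins_M_game ?W ?X" using cM pm that by linarith
    moreover have "\<not> maker_wins_B_game ?W ?X" using cB pm that by linarith
    ultimately show ?thesis unfolding O by simp
  qed
  have B1: "O_SR ?X (corona_E VG EG VH EH) = Out_N" if "card VG = 3" "card VH = 1"
  proof -
    have "maker_wins_M_game ?W ?X" unfolding maker_wins_M_game_def using mk[of True] that by simp
    moreover have "\<not> maker_wins_B_game ?W ?X" using cB that by simp
    ultimately show ?thesis unfolding O by simp
  qed
  have B2: "O_SR ?X (corona_E VG EG VH EH) = Out_B" if "card VG = 3" "card VH \<ge> 2"
  proof -
    have "\<not> maker_wins_M_game ?W ?X" using cM that by simp
    moreover have "\<not> maker_wins_B_game ?W ?X" using cB that by simp
    ultimately show ?thesis unfolding O by simp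
  qed
  have C1: "O_SR ?X (corona_E VG EG VH EH) = Out_M" if "card VG = 2" "card VH = 1"
  proof -
    have "maker_wins_M_game ?W ?X" unfolding maker_wins_M_game_def using mk[of True] that by simp
    moreover have "maker_wins_B_game ?W ?X" unfolding maker_wins_B_game_def using mk[of False] that by simp
    ultimately show ?thesis unfolding O by simp
  qed
  have C2: "O_SR ?X (corona_E VG EG VH EH) = Out_B" if "card VG = 2" "card VH \<ge> 2"
  proof -
    have "\<not> maker_wins_M_game ?W ?X"
    proof (cases "card VH = 2")
      case True then show ?thesis using tM that by simp
    next
      case False then show ?thesis using cM that by simp
    qed
    moreover have "\<not> maker_wins_B_game ?W ?X" using cB that by simp
    ultimately show ?thesis unfolding O by simp
  qed
  show ?thesis using A B1 B2 C1 C2 by blast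
qed

end
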